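(* In the supersample setting described in the context, let $\ell$ be the zero-one loss and let $\mathcal A$ be an interpolating algorithm. For each $i$, let $\alpha_i=P(\Delta L_i=0\mid U_i=0)$ (which equals $P(\Delta L_i=0\mid U_i=1)$). Then for each $i$, $I(\Delta L_i;U_i)=(1-\alpha_i)\ln 2$ nats, and \[ |\mathrm{Err}|=L_\mu=\sum_{i=1}^n\frac{I(\Delta L_i;U_i)}{n\ln 2}. \]
   Context: Let $\mathcal Z=\mathcal X\times\mathcal Y$ and let $\mu$ be a distribution on $\mathcal Z$. A (possibly randomized) learning algorithm $\mathcal A$ maps a training sample in $\mathcal Z^n$ to a hypothesis $W\in\mathcal W$ (described by $P_{W|S}$); each $w$ defines a predictor $f_w:\mathcal X\to\mathcal Y$. The zero-one loss is $\ell(w,(x,y))=\mathbb 1\{f_w(x)\neq y\}$. For $S=(Z_1,\dots,Z_n)\sim\mu^{n}$ and $W\sim P_{W|S}$, let $L_\mu=\mathbb E_W\mathbb E_{Z'\sim\mu}[\ell(W,Z')]$ (with $Z'$ independent of $(S,W)$), $L_S(w)=\frac1n\sum_{i}\ell(w,Z_i)$, $L_n=\mathbb E_{W,S}[L_S(W)]$, $\mathrm{Err}=L_\mu-L_n$. Supersample: $\widetilde Z=(\widetilde Z_{i,j})_{i\in\{1,\dots,n\},j\in\{0,1\}}$ with i.i.d. entries of law $\mu$; $U=(U_1,\dots,U_n)$ uniform on $\{0,1\}^n$, independent of $\widetilde Z$; $W=\mathcal A(\widetilde Z_U)$ where $\widetilde Z_U=(\widetilde Z_{1,U_1},\dots,\widetilde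 Z_{n,U_n})$. Put $L_{i,j}=\ell(W,\widetilde Z_{i,j})$, $L_i^+=L_{i,0}$, $L_i^-=L_{i,1}$, $\Delta L_i=L_i^- - L_i^+\in\{-1,0,1\}$. An algorithm is interpolating if it achieves zero training error, i.e. $\ell(W,\widetilde Z_{i,U_i})=0$ almost surely for every $i$. Mutual information is in nats. *)

theory Defs
  imports "HOL-Probability.Probability"
begin

definition zero_one_loss :: "('w \<Rightarrow> 'x \<Rightarrow> 'y) \<Rightarrow> 'w \<Rightarrow> 'x \<times> 'y \<Rightarrow> real" where
  "zero_one_loss f w z = (if f w (fst z) = snd z then 0 else 1)"

definition std_joint :: "nat \<Rightarrow> 'z measure \<Rightarrow> 'w measure \<Rightarrow> ((nat \<Rightarrow> 'z) \<Rightarrow> 'w measure)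
    \<Rightarrow> ((nat \<Rightarrow> 'z) \<times> 'w) measure" where
  "std_joint n \<mu> Wm A =
     (PiM {..<n} (\<lambda>_. \<mu>)) \<bind> (\<lambda>s. A s \<bind> (\<lambda>w. return (PiM {..<n} (\<lambda>_. \<mu>) \<Otimes>\<^sub>M Wm) (s, w)))"

definition pop_risk :: "nat \<Rightarrow> 'z measure \<Rightarrow> 'w measure \<Rightarrow> ((nat \<Rightarrow> 'z) \<Rightarrow> 'w measure)
    \<Rightarrow> ('w \<Rightarrow> 'z \<Rightarrow> real) \<Rightarrow> real" where
  "pop_risk n \<mu> Wm A l = (\<integral>p. (\<integral>z. l (snd p) z \<partial>\<mu>) \<partial>(std_joint n \<mu> Wm A))"

definition emp_risk :: "nat \<Rightarrow> 'z measure \<Rightarrow> 'w measure \<Rightarrow> ((nat \<Rightarrow> 'z) \<Rightarrow> 'w measure)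
    \<Rightarrow> ('w \<Rightarrow> 'z \<Rightarrow> real) \<Rightarrow> real" where
  "emp_risk n \<mu> Wm A l = (\<integral>p. (\<Sum>i<n. l (snd p) (fst p i)) / real n \<partial>(std_joint n \<mu> Wm A))"

definition gen_err :: "nat \<Rightarrow> 'z measure \<Rightarrow> 'w measure \<Rightarrow> ((nat \<Rightarrow> 'z) \<Rightarrow> 'w measure)
    \<Rightarrow> ('w \<Rightarrow> 'z \<Rightarrow> real) \<Rightarrow> real" where
  "gen_err n \<mu> Wm A l = pop_risk n \<mu> Wm A l - emp_risk n \<mu> Wm A l"

text \<open>The supersample is a function on {..<n} x UNIV
  (index j :: bool, False = 0, True = 1) with i.i.d. entries of law mu;
  U is uniform on {0,1}^n (i.i.d. fair bits), independent of the supersample;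
  W ~ A(Z~_U).\<close>
definition super_space :: "nat \<Rightarrow> 'z measure \<Rightarrow> ((nat \<times> bool \<Rightarrow> 'z) \<times> (nat \<Rightarrow> bool)) measure" where
  "super_space n \<mu> = PiM ({..<n} \<times> UNIV) (\<lambda>_. \<mu>) \<Otimes>\<^sub>M PiM {..<n} (\<lambda>_. measure_pmf (bernoulli_pmf (1/2)))"

definition select :: "nat \<Rightarrow> (nat \<times> bool \<Rightarrow> 'z) \<Rightarrow> (nat \<Rightarrow> bool) \<Rightarrow> (nat \<Rightarrow> 'z)" where
  "select n zt u = restrict (\<lambda>i. zt (i, u i)) {..<n}"

definition super_joint :: "nat \<Rightarrow> 'z measure \<Rightarrow> 'w measure \<Rightarrow> ((nat \<Rightarrow> 'z) \<Rightarrow> 'w measure)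
    \<Rightarrow> (((nat \<times> bool \<Rightarrow> 'z) \<times> (nat \<Rightarrow> bool)) \<times> 'w) measure" where
  "super_joint n \<mu> Wm A =
     super_space n \<mu> \<bind>
       (\<lambda>(zt, u). A (select n zt u) \<bind> (\<lambda>w. return (super_space n \<mu> \<Otimes>\<^sub>M Wm) ((zt, u), w)))"

definition sU :: "nat \<Rightarrow> ((nat \<times> bool \<Rightarrow> 'z) \<times> (nat \<Rightarrow> bool)) \<times> 'w \<Rightarrow> bool" where
  "sU i x = snd (fst x) i"

definition sW :: "((nat \<times> bool \<Rightarrow> 'z) \<times> (nat \<Rightarrow> bool)) \<times> 'w \<Rightarrow> 'w" where
  "sW x = snd x"

definition sZ :: "nat \<Rightarrow> bool \<Rightarrow> ((nat \<times> bool \<Rightarrow> 'z) \<times> (nat \<Rightarrow> bool)) \<times> 'w \<Rightarrow> 'z" where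
  "sZ i j x = fst (fst x) (i, j)"

definition sL :: "('w \<Rightarrow> 'z \<Rightarrow> real) \<Rightarrow> nat \<Rightarrow> bool \<Rightarrow> ((nat \<times> bool \<Rightarrow> 'z) \<times> (nat \<Rightarrow> bool)) \<times> 'w \<Rightarrow> real" where
  "sL l i j x = l (sW x) (sZ i j x)"

definition deltaL :: "('w \<Rightarrow> 'z \<Rightarrow> real) \<Rightarrow> nat \<Rightarrow> ((nat \<times> bool \<Rightarrow> 'z) \<times> (nat \<Rightarrow> bool)) \<times> 'w \<Rightarrow> real" where
  "deltaL l i x = sL l i True x - sL l i False x"

definition MI_nats :: "'a measure \<Rightarrow> ('a \<Rightarrow> 'b) \<Rightarrow> ('a \<Rightarrow> 'c) \<Rightarrow> real" where
  "MI_nats M X Y = prob_space.mutual_information M (exp 1) (count_space UNIV) (count_space UNIV) X Y"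

end

theory Submission
  imports Defs
begin

lemma sets_bern[simp]: "sets (measure_pmf (bernoulli_pmf (1/2))) = sets (count_space UNIV)"
  by simp

lemma select_meas[measurable]:
  "(\<lambda>x. select n (fst x) (snd x)) \<in> super_space n \<mu> \<rightarrow>\<^sub>M PiM {..<n} (\<lambda>_. \<mu>)"
  unfolding select_def super_space_def
proof (rule measurable_restrict)
  fix i assume i: "i \<in> {..<n}"
  let ?S = "PiM ({..<n} \<times> UNIV) (\<lambda>_. \<mu>) \<Otimes>\<^sub>M PiM {..<n} (\<lambda>_. measure_pmf (bernoulli_pmf (1/2)))"
  have c1: "(\<lambda>x. fst x (i,b)) \<in> ?S \<rightarrow>\<^sub>M \<mu>" for b
    using i by (intro measurable_compose[OF measurable_fst measurable_component_singleton]) auto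
  have c2: "(\<lambda>x. snd x i) \<in> ?S \<rightarrow>\<^sub>M measure_pmf (bernoulli_pmf (1/2))"
    using i by (intro measurable_compose[OF measurable_snd measurable_component_singleton]) auto
  have c3: "(\<lambda>x. snd x i) \<in> ?S \<rightarrow>\<^sub>M count_space UNIV"
    using c2 by (simp cong: measurable_cong_sets)
  have "(\<lambda>x. if snd x i then fst x (i, True) else fst x (i, False)) \<in> ?S \<rightarrow>\<^sub>M \<mu>"
    using c1 c3 by measurable
  then show "(\<lambda>x. fst x (i, snd x i)) \<in> ?S \<rightarrow>\<^sub>M \<mu>"
    by (rule measurable_cong[THEN iffD1, rotated]) auto
qed

lemma prob_super_space: "prob_space \<mu> \<Longrightarrow> prob_space (super_space n \<mu>)"
  unfolding super_space_def
  by (intro prob_space_pair prob_space_PiM prob_space_measure_pmf)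



context
  fixes n :: nat and \<mu> :: "'z measure" and Wm :: "'w measure" and A
  assumes mu: "prob_space \<mu>" and A_kernel: "A \<in> PiM {..<n} (\<lambda>_. \<mu>) \<rightarrow>\<^sub>M prob_algebra Wm"
begin

lemma A_sel_meas: "(\<lambda>x. A (select n (fst x) (snd x))) \<in> super_space n \<mu> \<rightarrow>\<^sub>M prob_algebra Wm"
  by (rule measurable_compose[OF select_meas A_kernel])

lemma A_sets: "s \<in> space (PiM {..<n} (\<lambda>_. \<mu>)) \<Longrightarrow> sets (A s) = sets Wm"
  using measurable_space[OF A_kernel] by (auto simp: space_prob_algebra)

lemma A_prob: "s \<in> space (PiM {..<n} (\<lambda>_. \<mu>)) \<Longrightarrow> prob_space (A s)"
  using measurable_space[OF A_kernel] by (auto simp: space_prob_algebra)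

lemma A_space: "s \<in> space (PiM {..<n} (\<lambda>_. \<mu>)) \<Longrightarrow> space (A s) = space Wm"
  using A_sets sets_eq_imp_space_eq by blast

lemma K_meas: "(\<lambda>x. A (select n (fst x) (snd x)) \<bind> (\<lambda>w. return (super_space n \<mu> \<Otimes>\<^sub>M Wm) (x, w)))
   \<in> super_space n \<mu> \<rightarrow>\<^sub>M prob_algebra (super_space n \<mu> \<Otimes>\<^sub>M Wm)"
proof (rule measurable_bind_prob_space2[OF A_sel_meas])
  show "(\<lambda>(x, y). return (super_space n \<mu> \<Otimes>\<^sub>M Wm) (x, y)) \<in> super_space n \<mu> \<Otimes>\<^sub>M Wm \<rightarrow>\<^sub>M prob_algebra (super_space n \<mu> \<Otimes>\<^sub>M Wm)"
    using measurable_return_prob_space by (simp add: case_prod_beta')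
qed

lemma J_eq: "super_joint n \<mu> Wm A = super_space n \<mu> \<bind> (\<lambda>x. A (select n (fst x) (snd x)) \<bind> (\<lambda>w. return (super_space n \<mu> \<Otimes>\<^sub>M Wm) (x, w)))"
  unfolding super_joint_def by (simp add: split_beta')

lemma SS_in: "super_space n \<mu> \<in> space (prob_algebra (super_space n \<mu>))"
  using prob_super_space[OF mu] by (simp add: space_prob_algebra)

lemma J_prob: "prob_space (super_joint n \<mu> Wm A)"
  unfolding J_eq by (rule prob_space_bind'[OF SS_in K_meas])

lemma J_sets: "sets (super_joint n \<mu> Wm A) = sets (super_space n \<mu> \<Otimes>\<^sub>M Wm)"
  unfolding J_eq by (rule sets_bind'[OF SS_in K_meas])

lemma J_space: "space (super_joint n \<mu> Wm A) = space (super_space n \<mu> \<Otimes>\<^sub>M Wm)"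
  using J_sets sets_eq_imp_space_eq by blast

lemma J_nn:
  assumes F: "F \<in> borel_measurable (super_space n \<mu> \<Otimes>\<^sub>M Wm)"
  shows "(\<integral>\<^sup>+y. F y \<partial>super_joint n \<mu> Wm A) =
     (\<integral>\<^sup>+x. \<integral>\<^sup>+w. F (x, w) \<partial>A (select n (fst x) (snd x)) \<partial>super_space n \<mu>)"
  unfolding J_eq
proof (subst nn_integral_bind[OF F measurable_prob_algebraD[OF K_meas]], rule nn_integral_cong)
  fix x assume x: "x \<in> space (super_space n \<mu>)"
  have s: "select n (fst x) (snd x) \<in> space (PiM {..<n} (\<lambda>_. \<mu>))"
    using measurable_space[OF select_meas x] .
  interpret P: prob_space "A (select n (fst x) (snd x))" using A_prob[OF s] .
  have "A (select n (fst x) (snd x)) \<bind> (\<lambda>w. return (super_space n \<mu> \<Otimes>\<^sub>M Wm) (x, w))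
     = distr (A (select n (fst x) (snd x))) (super_space n \<mu> \<Otimes>\<^sub>M Wm) (\<lambda>w. (x, w))"
    apply (rule bind_return_distr')
    using P.not_empty apply simp
    using x A_sets[OF s] by (simp cong: measurable_cong_sets)
  then show "(\<integral>\<^sup>+y. F y \<partial>(A (select n (fst x) (snd x)) \<bind> (\<lambda>w. return (super_space n \<mu> \<Otimes>\<^sub>M Wm) (x, w))))
     = (\<integral>\<^sup>+w. F (x, w) \<partial>A (select n (fst x) (snd x)))"
    using x A_sets[OF s] F by (simp add: nn_integral_distr cong: measurable_cong_sets)
qed

lemma Mn_prob: "prob_space (PiM {..<n} (\<lambda>_. \<mu>))"
  using mu by (intro prob_space_PiM) auto

lemma std_nn:
  assumes F: "F \<in> borel_measurable (PiM {..<n} (\<lambda>_. \<mu>) \<Otimes>\<^sub>M Wm)"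
  shows "(\<integral>\<^sup>+y. F y \<partial>std_joint n \<mu> Wm A) =
     (\<integral>\<^sup>+s. \<integral>\<^sup>+w. F (s, w) \<partial>A s \<partial>PiM {..<n} (\<lambda>_. \<mu>))"
  unfolding std_joint_def
proof (subst nn_integral_bind[OF F], rule measurable_prob_algebraD, rule measurable_bind_prob_space2[OF A_kernel])
  show "(\<lambda>(x, y). return (PiM {..<n} (\<lambda>_. \<mu>) \<Otimes>\<^sub>M Wm) (x, y)) \<in> PiM {..<n} (\<lambda>_. \<mu>) \<Otimes>\<^sub>M Wm \<rightarrow>\<^sub>M prob_algebra (PiM {..<n} (\<lambda>_. \<mu>) \<Otimes>\<^sub>M Wm)"
    using measurable_return_prob_space by (simp add: case_prod_beta')
next
  show "(\<integral>\<^sup>+x. \<integral>\<^sup>+y. F y \<partial>(A x \<bind> (\<lambda>w. return (PiM {..<n} (\<lambda>_. \<mu>) \<Otimes>\<^sub>M Wm) (x, w))) \<partial>PiM {..<n} (\<lambda>_. \<mu>)) =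
    (\<integral>\<^sup>+s. \<integral>\<^sup>+w. F (s, w) \<partial>A s \<partial>PiM {..<n} (\<lambda>_. \<mu>))"
  proof (rule nn_integral_cong)
    fix s assume s: "s \<in> space (PiM {..<n} (\<lambda>_. \<mu>))"
    interpret P: prob_space "A s" using A_prob[OF s] .
    have "A s \<bind> (\<lambda>w. return (PiM {..<n} (\<lambda>_. \<mu>) \<Otimes>\<^sub>M Wm) (s, w))
       = distr (A s) (PiM {..<n} (\<lambda>_. \<mu>) \<Otimes>\<^sub>M Wm) (\<lambda>w. (s, w))"
      apply (rule bind_return_distr')
      using P.not_empty apply simp
      using s A_sets[OF s] by (simp cong: measurable_cong_sets)
    then show "(\<integral>\<^sup>+y. F y \<partial>(A s \<bind> (\<lambda>w. return (PiM {..<n} (\<lambda>_. \<mu>) \<Otimes>\<^sub>M Wm) (s, w)))) = (\<integral>\<^sup>+w. F (s, w) \<partial>A s)"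
      using s A_sets[OF s] F by (simp add: nn_integral_distr cong: measurable_cong_sets)
  qed
qed

end


lemma pps: "prob_space M \<Longrightarrow> product_prob_space (\<lambda>_. M)"
  by (simp add: product_prob_space_def product_prob_space_axioms_def product_sigma_finite_def
        prob_space_imp_sigma_finite)

lemma bern_half:
  assumes i: "i < n"
  shows "emeasure (PiM {..<n} (\<lambda>_. measure_pmf (bernoulli_pmf (1/2))))
     {u \<in> space (PiM {..<n} (\<lambda>_. measure_pmf (bernoulli_pmf (1/2)))). u i = b} = 1/2"
proof -
  let ?B = "measure_pmf (bernoulli_pmf (1/2))"
  interpret P: product_prob_space "\<lambda>_. ?B" "{..<n}"
    by (rule pps) (rule prob_space_measure_pmf)
  have d: "distr (PiM {..<n} (\<lambda>_. ?B)) ?B (\<lambda>\<omega>. \<omega> i) = ?B"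
    using P.PiM_component[of i] i by simp
  have "emeasure (PiM {..<n} (\<lambda>_. ?B)) {u \<in> space (PiM {..<n} (\<lambda>_. ?B)). u i = b}
     = emeasure (distr (PiM {..<n} (\<lambda>_. ?B)) ?B (\<lambda>\<omega>. \<omega> i)) {b}"
    using i by (subst emeasure_distr) (auto intro!: arg_cong2[where f=emeasure])
  also have "\<dots> = 1/2" unfolding d
    by (cases b) (simp_all add: emeasure_pmf_single ennreal_minus flip: divide_ennreal, simp_all add: divide_ennreal_def)
  finally show ?thesis .
qed



lemma other_meas[measurable]:
  assumes i: "i < n"
  shows "(\<lambda>x. fst x (i, \<not> snd x i)) \<in> super_space n \<mu> \<rightarrow>\<^sub>M \<mu>"
  unfolding super_space_def
proof -
  let ?S = "PiM ({..<n} \<times> UNIV) (\<lambda>_. \<mu>) \<Otimes>\<^sub>M PiM {..<n} (\<lambda>_. measure_pmf (bernoulli_pmf (1/2)))"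
  have c1: "(\<lambda>x. fst x (i,b)) \<in> ?S \<rightarrow>\<^sub>M \<mu>" for b :: bool
    using i by (intro measurable_compose[OF measurable_fst measurable_component_singleton]) auto
  have c2: "(\<lambda>x. snd x i) \<in> ?S \<rightarrow>\<^sub>M measure_pmf (bernoulli_pmf (1/2))"
    using i by (intro measurable_compose[OF measurable_snd measurable_component_singleton]) auto
  have c3: "(\<lambda>x. snd x i) \<in> ?S \<rightarrow>\<^sub>M count_space UNIV"
    using c2 by (simp cong: measurable_cong_sets)
  have "(\<lambda>x. if snd x i then fst x (i, False) else fst x (i, True)) \<in> ?S \<rightarrow>\<^sub>M \<mu>"
    using c1 c3 by measurable
  then show "(\<lambda>x. fst x (i, \<not> snd x i)) \<in> ?S \<rightarrow>\<^sub>M \<mu>"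
    by (rule measurable_cong[THEN iffD1, rotated]) auto
qed

lemma U_meas[measurable]:
  assumes i: "i < n"
  shows "(\<lambda>x. snd x i) \<in> super_space n \<mu> \<rightarrow>\<^sub>M count_space UNIV"
  unfolding super_space_def
proof -
  let ?S = "PiM ({..<n} \<times> UNIV) (\<lambda>_. \<mu>) \<Otimes>\<^sub>M PiM {..<n} (\<lambda>_. measure_pmf (bernoulli_pmf (1/2)))"
  have c2: "(\<lambda>x. snd x i) \<in> ?S \<rightarrow>\<^sub>M measure_pmf (bernoulli_pmf (1/2))"
    using i by (intro measurable_compose[OF measurable_snd measurable_component_singleton]) auto
  then show "(\<lambda>x. snd x i) \<in> ?S \<rightarrow>\<^sub>M count_space UNIV"
    by (simp cong: measurable_cong_sets)
qed

context
  fixes n :: nat and \<mu> :: "'z measure"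
  assumes mu: "prob_space \<mu>"
begin

lemma fixed_u:
  assumes i: "i < n" and G[measurable]: "G \<in> borel_measurable (PiM {..<n} (\<lambda>_. \<mu>) \<Otimes>\<^sub>M \<mu>)"
  shows "(\<integral>\<^sup>+zt. G (select n zt u, zt (i, \<not> u i)) \<partial>PiM ({..<n}\<times>UNIV) (\<lambda>_. \<mu>))
       = (\<integral>\<^sup>+s. \<integral>\<^sup>+z. G (s,z) \<partial>\<mu> \<partial>PiM {..<n} (\<lambda>_. \<mu>))"
proof -
  define t where "t j = (if j < n then (j, u j) else (i, \<not> u i))" for j
  have inj: "inj_on t {..n}"
    unfolding inj_on_def t_def by (auto split: if_splits)
  have tK: "t \<in> {..n} \<rightarrow> {..<n}\<times>UNIV"
    using i unfolding t_def by auto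
  have D: "distr (PiM ({..<n}\<times>UNIV) (\<lambda>_. \<mu>)) (PiM {..n} (\<lambda>_. \<mu>)) (\<lambda>\<omega>. \<lambda>j\<in>{..n}. \<omega> (t j)) = PiM {..n} (\<lambda>_. \<mu>)"
    using distr_PiM_reindex[of "{..<n}\<times>UNIV" "\<lambda>_. \<mu>" t "{..n}"] mu inj tK by simp
  define H where "H \<omega> = G (restrict \<omega> {..<n}, \<omega> n)" for \<omega> :: "nat \<Rightarrow> 'z"
  have Hm: "H \<in> borel_measurable (PiM {..n} (\<lambda>_. \<mu>))"
  proof -
    have r: "(\<lambda>\<omega>. restrict \<omega> {..<n}) \<in> PiM {..n} (\<lambda>_. \<mu>) \<rightarrow>\<^sub>M PiM {..<n} (\<lambda>_. \<mu>)"
      by (rule measurable_restrict_subset) auto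
    have c: "(\<lambda>\<omega>. \<omega> n) \<in> PiM {..n} (\<lambda>_. \<mu>) \<rightarrow>\<^sub>M \<mu>"
      by (rule measurable_component_singleton) auto
    show ?thesis unfolding H_def
      by (rule measurable_compose[OF measurable_Pair[OF r c] G])
  qed
  have rm: "(\<lambda>\<omega>. \<lambda>j\<in>{..n}. \<omega> (t j)) \<in> PiM ({..<n}\<times>UNIV) (\<lambda>_. \<mu>) \<rightarrow>\<^sub>M PiM {..n} (\<lambda>_. \<mu>)"
    using tK by (intro measurable_restrict measurable_component_singleton) auto
  have eq1: "G (select n zt u, zt (i, \<not> u i)) = H (\<lambda>j\<in>{..n}. zt (t j))" for zt
    unfolding H_def select_def t_def by (auto intro!: arg_cong2[where f="\<lambda>a b. G (a, b)"] simp: restrict_def fun_eq_iff)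
  have "(\<integral>\<^sup>+zt. G (select n zt u, zt (i, \<not> u i)) \<partial>PiM ({..<n}\<times>UNIV) (\<lambda>_. \<mu>))
      = (\<integral>\<^sup>+zt. H (\<lambda>j\<in>{..n}. zt (t j)) \<partial>PiM ({..<n}\<times>UNIV) (\<lambda>_. \<mu>))"
    by (simp add: eq1)
  also have "\<dots> = (\<integral>\<^sup>+\<omega>. H \<omega> \<partial>distr (PiM ({..<n}\<times>UNIV) (\<lambda>_. \<mu>)) (PiM {..n} (\<lambda>_. \<mu>)) (\<lambda>\<omega>. \<lambda>j\<in>{..n}. \<omega> (t j)))"
    using nn_integral_distr[OF rm, of H] Hm by simp
  also have "\<dots> = (\<integral>\<^sup>+\<omega>. H \<omega> \<partial>PiM {..n} (\<lambda>_. \<mu>))"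
    by (simp only: D)
  also have "\<dots> = (\<integral>\<^sup>+x. \<integral>\<^sup>+y. H (x(n := y)) \<partial>\<mu> \<partial>PiM {..<n} (\<lambda>_. \<mu>))"
  proof -
    interpret P: product_prob_space "\<lambda>_. \<mu>" "{..<n}" by (rule pps[OF mu])
    have "{..n} = insert n {..<n}" by auto
    then show ?thesis using P.product_nn_integral_insert[of "{..<n}" n H] Hm by simp
  qed
  also have "\<dots> = (\<integral>\<^sup>+s. \<integral>\<^sup>+z. G (s,z) \<partial>\<mu> \<partial>PiM {..<n} (\<lambda>_. \<mu>))"
  proof (rule nn_integral_cong, rule nn_integral_cong)
    fix x y assume x: "x \<in> space (PiM {..<n} (\<lambda>_. \<mu>))"
    then have "restrict (x(n := y)) {..<n} = x"
      by (auto simp: space_PiM PiE_def extensional_def restrict_def fun_eq_iff)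
    then show "H (x(n := y)) = G (x, y)" unfolding H_def by simp
  qed
  finally show ?thesis .
qed

end


context
  fixes n :: nat and \<mu> :: "'z measure"
  assumes mu: "prob_space \<mu>"
begin

lemma key:
  assumes i: "i < n" and G[measurable]: "G \<in> borel_measurable (PiM {..<n} (\<lambda>_. \<mu>) \<Otimes>\<^sub>M \<mu>)"
  shows "(\<integral>\<^sup>+x. indicator {x. snd x i = b} x * G (select n (fst x) (snd x), fst x (i, \<not> snd x i)) \<partial>super_space n \<mu>)
       = (1/2) * (\<integral>\<^sup>+s. \<integral>\<^sup>+z. G (s,z) \<partial>\<mu> \<partial>PiM {..<n} (\<lambda>_. \<mu>))"
proof -
  let ?Z = "PiM ({..<n} \<times> (UNIV :: bool set)) (\<lambda>_. \<mu>)"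
  let ?B = "PiM {..<n} (\<lambda>_. measure_pmf (bernoulli_pmf (1/2)))"
  let ?C = "\<integral>\<^sup>+s. \<integral>\<^sup>+z. G (s,z) \<partial>\<mu> \<partial>PiM {..<n} (\<lambda>_. \<mu>)"
  have pZ: "prob_space ?Z" using mu by (intro prob_space_PiM) auto
  have pB: "prob_space ?B" by (intro prob_space_PiM prob_space_measure_pmf)
  interpret PS: pair_sigma_finite ?Z ?B
    by (intro pair_sigma_finite.intro prob_space_imp_sigma_finite pZ pB)
  have sel: "(\<lambda>x. select n (fst x) (snd x)) \<in> ?Z \<Otimes>\<^sub>M ?B \<rightarrow>\<^sub>M PiM {..<n} (\<lambda>_. \<mu>)"
    by (rule select_meas[of n \<mu>, unfolded super_space_def])
  have oth: "(\<lambda>x. fst x (i, \<not> snd x i)) \<in> ?Z \<Otimes>\<^sub>M ?B \<rightarrow>\<^sub>M \<mu>"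
    by (rule other_meas[OF i, of \<mu>, unfolded super_space_def])
  have um: "(\<lambda>x. snd x i) \<in> ?Z \<Otimes>\<^sub>M ?B \<rightarrow>\<^sub>M count_space UNIV"
    by (rule U_meas[OF i, of \<mu>, unfolded super_space_def])
  have Fm: "(\<lambda>x. indicator {x. snd x i = b} x * G (select n (fst x) (snd x), fst x (i, \<not> snd x i)))
     \<in> borel_measurable (?Z \<Otimes>\<^sub>M ?B)"
  proof -
    have "(\<lambda>x. G (select n (fst x) (snd x), fst x (i, \<not> snd x i))) \<in> borel_measurable (?Z \<Otimes>\<^sub>M ?B)"
      by (rule measurable_compose[OF measurable_Pair[OF sel oth] G])
    moreover have "{x. snd x i = b} \<inter> space (?Z \<Otimes>\<^sub>M ?B) \<in> sets (?Z \<Otimes>\<^sub>M ?B)"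
    proof -
      have e: "{x. snd x i = b} \<inter> space (?Z \<Otimes>\<^sub>M ?B) = (\<lambda>x. snd x i) -` {b} \<inter> space (?Z \<Otimes>\<^sub>M ?B)" by auto
      show ?thesis unfolding e by (rule measurable_sets[OF um]) simp
    qed
    ultimately show ?thesis
      by (intro borel_measurable_times_ennreal) (auto simp: borel_measurable_indicator_iff)
  qed
  have "(\<integral>\<^sup>+x. indicator {x. snd x i = b} x * G (select n (fst x) (snd x), fst x (i, \<not> snd x i)) \<partial>super_space n \<mu>)
      = (\<integral>\<^sup>+u. \<integral>\<^sup>+zt. indicator {x. snd x i = b} (zt, u) * G (select n zt u, zt (i, \<not> u i)) \<partial>?Z \<partial>?B)"
    unfolding super_space_def by (simp only: PS.nn_integral_snd[OF Fm, symmetric] fst_conv snd_conv)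
  also have "\<dots> = (\<integral>\<^sup>+u. ?C * indicator {u \<in> space ?B. u i = b} u \<partial>?B)"
  proof (rule nn_integral_cong)
    fix u assume u: "u \<in> space ?B"
    show "(\<integral>\<^sup>+zt. indicator {x. snd x i = b} (zt, u) * G (select n zt u, zt (i, \<not> u i)) \<partial>?Z)
        = ?C * indicator {u \<in> space ?B. u i = b} u"
    proof (cases "u i = b")
      case True
      then show ?thesis using u fixed_u[OF mu i G, of u] by simp
    next
      case False
      then show ?thesis using u by simp
    qed
  qed
  also have "\<dots> = ?C * emeasure ?B {u \<in> space ?B. u i = b}"
  proof (rule nn_integral_cmult_indicator)
    have "(\<lambda>u. u i) \<in> ?B \<rightarrow>\<^sub>M count_space UNIV"
      using i by (simp cong: measurable_cong_sets)
    then have "(\<lambda>u. u i) -` {b} \<inter> space ?B \<in> sets ?B" by (rule measurable_sets) simp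
    moreover have "{u \<in> space ?B. u i = b} = (\<lambda>u. u i) -` {b} \<inter> space ?B" by auto
    ultimately show "{u \<in> space ?B. u i = b} \<in> sets ?B" by simp
  qed
  also have "\<dots> = (1/2) * ?C"
    using bern_half[OF i, of b] by (simp add: mult.commute)
  finally show ?thesis .
qed

end


definition qf :: "real \<Rightarrow> real \<Rightarrow> bool \<Rightarrow> real" where
  "qf L d b = (if d = 0 then (1 - L) / 2 else if (d = 1 \<and> \<not> b) \<or> (d = -1 \<and> b) then L / 2 else 0)"

definition gfun :: "real \<Rightarrow> bool \<Rightarrow> real" where
  "gfun d b = (if d = 0 then 1 else if (d = 1 \<and> \<not> b) \<or> (d = -1 \<and> b) then 2 else 0)"

lemma qf_nonneg: "0 \<le> L \<Longrightarrow> L \<le> 1 \<Longrightarrow> 0 \<le> qf L d b"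
  unfolding qf_def by auto

lemma gfun_nonneg: "0 \<le> gfun d b"
  unfolding gfun_def by auto

lemma decomp_sum:
  fixes c :: "real \<Rightarrow> bool \<Rightarrow> 'r::semiring_1"
  assumes E: "\<And>d b. x \<in> E d b \<longleftrightarrow> D x = d \<and> U x = b" and r: "D x \<in> {-1,0,1}"
  shows "c (D x) (U x) = (\<Sum>d\<in>{-1,0,1}. \<Sum>b\<in>UNIV. c d b * indicator (E d b) x)"
  using r by (cases "U x") (auto simp: UNIV_bool indicator_def E)

lemma meas_rb:
  fixes h :: "real \<Rightarrow> bool \<Rightarrow> 'b::topological_space"
  assumes "sets M = sets (count_space UNIV \<Otimes>\<^sub>M count_space UNIV)"
  shows "(\<lambda>z. h (fst z) (snd z)) \<in> borel_measurable M"
proof -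
  have "(\<lambda>z. if snd z then h (fst z) True else h (fst z) False) \<in> borel_measurable (count_space UNIV \<Otimes>\<^sub>M count_space (UNIV :: bool set))"
  proof (rule measurable_If)
    show "(\<lambda>z. h (fst z) True) \<in> borel_measurable (count_space UNIV \<Otimes>\<^sub>M count_space (UNIV :: bool set))"
      by (rule measurable_compose[OF measurable_fst]) simp
    show "(\<lambda>z. h (fst z) False) \<in> borel_measurable (count_space UNIV \<Otimes>\<^sub>M count_space (UNIV :: bool set))"
      by (rule measurable_compose[OF measurable_fst]) simp
    show "{z \<in> space (count_space UNIV \<Otimes>\<^sub>M count_space (UNIV :: bool set)). snd (z :: real \<times> bool)}
       \<in> sets (count_space UNIV \<Otimes>\<^sub>M count_space UNIV)"
      by measurable
  qed
  moreover have "(\<lambda>z. if snd z then h (fst z) True else h (fst z) False) = (\<lambda>z. h (fst z) (snd z))"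
    by (auto simp: fun_eq_iff)
  ultimately show ?thesis using assms by (simp cong: measurable_cong_sets)
qed



lemma MI_calc:
  fixes J :: "'a measure" and D :: "'a \<Rightarrow> real" and U :: "'a \<Rightarrow> bool" and L :: real
  assumes J: "prob_space J"
    and Dm[measurable]: "D \<in> borel_measurable J" and Um[measurable]: "U \<in> J \<rightarrow>\<^sub>M count_space UNIV"
    and rng: "\<And>x. D x \<in> {-1,0,1}"
    and L: "0 \<le> L" "L \<le> 1"
    and q: "\<And>d b. d \<in> {-1,0,1} \<Longrightarrow> measure J {x\<in>space J. D x = d \<and> U x = b} = qf L d b"
  shows "prob_space.mutual_information J (exp 1) (count_space UNIV) (count_space UNIV) D U = L * ln 2"
proof -
  interpret J: prob_space J by (rule J)
  define R where "R = {-1, 0, 1::real}"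
  have finR: "finite R" unfolding R_def by simp
  define E where "E d b = {x\<in>space J. D x = d \<and> U x = b}" for d b
  have E_sets[measurable]: "E d b \<in> sets J" for d b
    unfolding E_def by measurable
  have Dc: "D \<in> J \<rightarrow>\<^sub>M count_space UNIV"
  proof (rule measurableI)
    fix A :: "real set"
    have "D -` A \<inter> space J = (\<Union>d\<in>A \<inter> R. {x\<in>space J. D x = d})"
      using rng unfolding R_def by auto
    also have "\<dots> \<in> sets J"
      by (rule sets.finite_UN) (auto simp: finR)
    finally show "D -` A \<inter> space J \<in> sets J" .
  qed simp
  have dec: "c (D x) (U x) = (\<Sum>d\<in>R. \<Sum>b\<in>UNIV. c d b * indicator (E d b) x)"
    if "x \<in> space J" for x and c :: "real \<Rightarrow> bool \<Rightarrow> ennreal"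
    unfolding R_def using rng[of x] by (intro decomp_sum) (auto simp: E_def that)
  have decr: "c (D x) (U x) = (\<Sum>d\<in>R. \<Sum>b\<in>UNIV. c d b * indicator (E d b) x)"
    if "x \<in> space J" for x and c :: "real \<Rightarrow> bool \<Rightarrow> real"
    unfolding R_def using rng[of x] by (intro decomp_sum) (auto simp: E_def that)
  have qE: "emeasure J (E d b) = ennreal (qf L d b)" if "d \<in> R" for d b
    using q[of d b] that unfolding E_def R_def by (simp add: J.emeasure_eq_measure)
  have qEr: "measure J (E d b) = qf L d b" if "d \<in> R" for d b
    using q[of d b] that unfolding E_def R_def by simp
  have nnJ: "(\<integral>\<^sup>+x. c (D x) (U x) \<partial>J) = (\<Sum>d\<in>R. \<Sum>b\<in>UNIV. c d b * ennreal (qf L d b))" for c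
  proof -
    have "(\<integral>\<^sup>+x. c (D x) (U x) \<partial>J) = (\<integral>\<^sup>+x. (\<Sum>d\<in>R. \<Sum>b\<in>UNIV. c d b * indicator (E d b) x) \<partial>J)"
      by (rule nn_integral_cong) (rule dec)
    also have "\<dots> = (\<Sum>d\<in>R. \<integral>\<^sup>+x. (\<Sum>b\<in>UNIV. c d b * indicator (E d b) x) \<partial>J)"
      by (rule nn_integral_sum) measurable
    also have "\<dots> = (\<Sum>d\<in>R. \<Sum>b\<in>UNIV. \<integral>\<^sup>+x. c d b * indicator (E d b) x \<partial>J)"
      by (intro sum.cong refl nn_integral_sum) measurable
    also have "\<dots> = (\<Sum>d\<in>R. \<Sum>b\<in>UNIV. c d b * emeasure J (E d b))"
      by (intro sum.cong refl nn_integral_cmult_indicator E_sets)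
    also have "\<dots> = (\<Sum>d\<in>R. \<Sum>b\<in>UNIV. c d b * ennreal (qf L d b))"
      by (intro sum.cong refl) (simp add: qE)
    finally show ?thesis .
  qed
  have intg: "integrable J (\<lambda>x. c * indicator (E d b) x :: real)" for c d b
    by (intro integrable_mult_right integrable_real_indicator E_sets) (simp add: less_top[symmetric])
  have riJ: "(\<integral>x. c (D x) (U x) \<partial>J) = (\<Sum>d\<in>R. \<Sum>b\<in>UNIV. c d b * qf L d b)" for c
  proof -
    have "(\<integral>x. c (D x) (U x) \<partial>J) = (\<integral>x. (\<Sum>d\<in>R. \<Sum>b\<in>UNIV. c d b * indicator (E d b) x) \<partial>J)"
      by (rule Bochner_Integration.integral_cong[OF refl]) (rule decr)
    also have "\<dots> = (\<Sum>d\<in>R. \<integral>x. (\<Sum>b\<in>UNIV. c d b * indicator (E d b) x) \<partial>J)"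
      by (rule Bochner_Integration.integral_sum) (intro Bochner_Integration.integrable_sum intg)
    also have "\<dots> = (\<Sum>d\<in>R. \<Sum>b\<in>UNIV. \<integral>x. c d b * indicator (E d b) x \<partial>J)"
      by (intro sum.cong refl Bochner_Integration.integral_sum intg)
    also have "\<dots> = (\<Sum>d\<in>R. \<Sum>b\<in>UNIV. c d b * measure J (E d b))"
      by (intro sum.cong refl) simp
    also have "\<dots> = (\<Sum>d\<in>R. \<Sum>b\<in>UNIV. c d b * qf L d b)"
      by (intro sum.cong refl) (simp add: qEr)
    finally show ?thesis .
  qed
  define PD where "PD = distr J (count_space UNIV) D"
  define PU where "PU = distr J (count_space UNIV) U"
  define Q where "Q = distr J (count_space UNIV \<Otimes>\<^sub>M count_space UNIV) (\<lambda>x. (D x, U x))"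
  define gg where "gg z = ennreal (gfun (fst z) (snd z))" for z
  have pPD: "prob_space PD" unfolding PD_def by (rule J.prob_space_distr[OF Dc])
  have pPU: "prob_space PU" unfolding PU_def by (rule J.prob_space_distr[OF Um])
  interpret PS: pair_sigma_finite PD PU
    by (intro pair_sigma_finite.intro prob_space_imp_sigma_finite pPD pPU)
  have setsP: "sets (PD \<Otimes>\<^sub>M PU) = sets (count_space UNIV \<Otimes>\<^sub>M count_space UNIV)"
    unfolding PD_def PU_def by (rule sets_pair_measure_cong) simp_all
  have nnPD: "(\<integral>\<^sup>+d. k d \<partial>PD) = (\<integral>\<^sup>+x. k (D x) \<partial>J)" for k
    unfolding PD_def by (rule nn_integral_distr[OF Dc]) simp
  have nnPU: "(\<integral>\<^sup>+b. k b \<partial>PU) = (\<integral>\<^sup>+x. k (U x) \<partial>J)" for k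
    unfolding PU_def by (rule nn_integral_distr[OF Um]) simp
  have ggm: "gg \<in> borel_measurable (PD \<Otimes>\<^sub>M PU)"
    unfolding gg_def using meas_rb[OF setsP, of "\<lambda>d b. ennreal (gfun d b)"] by simp
  have qnn: "0 \<le> qf L d b" for d b using qf_nonneg[OF L] .
  have hq: "(\<Sum>d'\<in>R. ennreal (qf L d' b)) = ennreal (1/2)" for b
  proof -
    have "(\<Sum>d'\<in>R. qf L d' b) = 1/2"
      unfolding R_def by (cases b) (simp_all add: qf_def field_simps)
    moreover have "(\<Sum>d'\<in>R. ennreal (qf L d' b)) = ennreal (\<Sum>d'\<in>R. qf L d' b)"
      by (rule sum_ennreal) (rule qnn)
    ultimately show ?thesis by (simp only:)
  qed
  have hpt: "ennreal (gfun d b) * ennreal (1/2) * (\<Sum>b'\<in>UNIV. ennreal (qf L d b')) = ennreal (qf L d b)"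
    if "d \<in> R" for d b
  proof -
    have r: "gfun d b * (1/2) * (\<Sum>b'\<in>UNIV. qf L d b') = qf L d b"
      using that unfolding R_def by (cases b) (auto simp: qf_def gfun_def UNIV_bool field_simps)
    have e1: "(\<Sum>b'\<in>UNIV. ennreal (qf L d b')) = ennreal (\<Sum>b'\<in>UNIV. qf L d b')"
      by (rule sum_ennreal) (rule qnn)
    have e2: "ennreal (gfun d b) * ennreal (1/2) = ennreal (gfun d b * (1/2))"
      by (rule ennreal_mult[symmetric]) (simp_all add: gfun_nonneg)
    have e3: "ennreal (gfun d b * (1/2)) * ennreal (\<Sum>b'\<in>UNIV. qf L d b') = ennreal (gfun d b * (1/2) * (\<Sum>b'\<in>UNIV. qf L d b'))"
      by (rule ennreal_mult[symmetric]) (simp_all add: gfun_nonneg sum_nonneg qnn)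
    show ?thesis by (simp only: e1 e2 e3 r)
  qed
  have dens: "density (PD \<Otimes>\<^sub>M PU) gg = Q"
  proof (rule measure_eqI)
    show "sets (density (PD \<Otimes>\<^sub>M PU) gg) = sets Q" unfolding Q_def using setsP by simp
    fix S assume "S \<in> sets (density (PD \<Otimes>\<^sub>M PU) gg)"
    then have S: "S \<in> sets (PD \<Otimes>\<^sub>M PU)" by simp
    have inner: "(\<integral>\<^sup>+b. gg (d,b) * indicator S (d,b) \<partial>PU) = (\<Sum>b\<in>UNIV. gg (d,b) * indicator S (d,b) * ennreal (1/2))" for d
    proof -
      have "(\<integral>\<^sup>+b. gg (d,b) * indicator S (d,b) \<partial>PU) = (\<integral>\<^sup>+x. gg (d, U x) * indicator S (d, U x) \<partial>J)"
        by (rule nnPU)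
      also have "\<dots> = (\<Sum>d'\<in>R. \<Sum>b\<in>UNIV. gg (d,b) * indicator S (d,b) * ennreal (qf L d' b))"
        using nnJ[of "\<lambda>d' b. gg (d,b) * indicator S (d,b)"] by simp
      also have "\<dots> = (\<Sum>b\<in>UNIV. gg (d,b) * indicator S (d,b) * (\<Sum>d'\<in>R. ennreal (qf L d' b)))"
        by (subst sum.swap) (simp add: sum_distrib_left)
      finally show ?thesis by (simp add: hq)
    qed
    have "emeasure (density (PD \<Otimes>\<^sub>M PU) gg) S = (\<integral>\<^sup>+z. gg z * indicator S z \<partial>(PD \<Otimes>\<^sub>M PU))"
      by (rule emeasure_density[OF ggm S])
    also have "\<dots> = (\<integral>\<^sup>+d. \<integral>\<^sup>+b. gg (d,b) * indicator S (d,b) \<partial>PU \<partial>PD)"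
    proof (rule PS.M2.nn_integral_fst[symmetric])
      show "(\<lambda>z. gg z * indicator S z) \<in> borel_measurable (PD \<Otimes>\<^sub>M PU)"
        using ggm S by simp
    qed
    also have "\<dots> = (\<integral>\<^sup>+d. (\<Sum>b\<in>UNIV. gg (d,b) * indicator S (d,b) * ennreal (1/2)) \<partial>PD)"
      by (simp only: inner)
    also have "\<dots> = (\<integral>\<^sup>+x. (\<Sum>b\<in>UNIV. gg (D x,b) * indicator S (D x,b) * ennreal (1/2)) \<partial>J)"
      by (rule nnPD)
    also have "\<dots> = (\<Sum>d\<in>R. \<Sum>b'\<in>UNIV. (\<Sum>b\<in>UNIV. gg (d,b) * indicator S (d,b) * ennreal (1/2)) * ennreal (qf L d b'))"
      using nnJ[of "\<lambda>d b'. (\<Sum>b\<in>UNIV. gg (d,b) * indicator S (d,b) * ennreal (1/2))"] by simp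
    also have "\<dots> = (\<Sum>d\<in>R. \<Sum>b\<in>UNIV. indicator S (d,b) * (ennreal (gfun d b) * ennreal (1/2) * (\<Sum>b'\<in>UNIV. ennreal (qf L d b'))))"
      by (rule sum.cong[OF refl]) (simp add: gg_def UNIV_bool algebra_simps)
    also have "\<dots> = (\<Sum>d\<in>R. \<Sum>b\<in>UNIV. indicator S (d,b) * ennreal (qf L d b))"
      by (intro sum.cong refl) (simp only: hpt)
    also have "\<dots> = (\<integral>\<^sup>+x. indicator S (D x, U x) \<partial>J)"
      using nnJ[of "\<lambda>d b. indicator S (d,b)"] by simp
    also have "\<dots> = emeasure J ((\<lambda>x. (D x, U x)) -` S \<inter> space J)"
    proof -
      have "(\<lambda>x. (D x, U x)) -` S \<inter> space J \<in> sets J"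
        using S setsP by (intro measurable_sets[OF measurable_Pair[OF Dc Um]]) simp
      then have "emeasure J ((\<lambda>x. (D x, U x)) -` S \<inter> space J) = (\<integral>\<^sup>+x. indicator ((\<lambda>x. (D x, U x)) -` S \<inter> space J) x \<partial>J)"
        by simp
      also have "\<dots> = (\<integral>\<^sup>+x. indicator S (D x, U x) \<partial>J)"
        by (rule nn_integral_cong) (simp split: split_indicator)
      finally show ?thesis ..
    qed
    also have "\<dots> = emeasure Q S"
      unfolding Q_def using S setsP by (subst emeasure_distr[OF measurable_Pair[OF Dc Um]]) simp_all
    finally show "emeasure (density (PD \<Otimes>\<^sub>M PU) gg) S = emeasure Q S" .
  qed
  have pP: "prob_space (PD \<Otimes>\<^sub>M PU)" by (rule prob_space_pair[OF pPD pPU])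
  interpret PP: prob_space "PD \<Otimes>\<^sub>M PU" by (rule pP)
  have rn: "AE z in PD \<Otimes>\<^sub>M PU. gg z = RN_deriv (PD \<Otimes>\<^sub>M PU) Q z"
    by (rule sigma_finite_measure.RN_deriv_unique[OF prob_space_imp_sigma_finite[OF pP] ggm dens])
  have "AE z in density (PD \<Otimes>\<^sub>M PU) gg. gg z = RN_deriv (PD \<Otimes>\<^sub>M PU) Q z"
    unfolding AE_density[OF ggm] using rn by (rule eventually_mono) simp
  then have rnQ: "AE z in Q. gg z = RN_deriv (PD \<Otimes>\<^sub>M PU) Q z"
    by (simp only: dens)
  have setsQ: "sets Q = sets (PD \<Otimes>\<^sub>M PU)" unfolding Q_def using setsP by simp
  have lgm: "(\<lambda>z. log (exp 1) (gfun (fst z) (snd z))) \<in> borel_measurable Q"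
    using meas_rb[of Q "\<lambda>d b. log (exp 1) (gfun d b)"] setsQ setsP by simp
  have "prob_space.mutual_information J (exp 1) (count_space UNIV) (count_space UNIV) D U
      = KL_divergence (exp 1) (PD \<Otimes>\<^sub>M PU) Q"
    unfolding J.mutual_information_def PD_def PU_def Q_def ..
  also have "\<dots> = (\<integral>z. entropy_density (exp 1) (PD \<Otimes>\<^sub>M PU) Q z \<partial>Q)"
    unfolding KL_divergence_def ..
  also have "\<dots> = (\<integral>z. log (exp 1) (gfun (fst z) (snd z)) \<partial>Q)"
  proof (rule integral_cong_AE)
    show "entropy_density (exp 1) (PD \<Otimes>\<^sub>M PU) Q \<in> borel_measurable Q"
      using measurable_entropy_density[of "exp 1" "PD \<Otimes>\<^sub>M PU" Q] setsQ
      by (simp cong: measurable_cong_sets)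
    show "(\<lambda>z. log (exp 1) (gfun (fst z) (snd z))) \<in> borel_measurable Q" by (rule lgm)
    show "AE z in Q. entropy_density (exp 1) (PD \<Otimes>\<^sub>M PU) Q z = log (exp 1) (gfun (fst z) (snd z))"
      using rnQ by (rule eventually_mono) (drule sym, simp add: entropy_density_def gg_def gfun_nonneg)
  qed
  also have "\<dots> = (\<integral>x. log (exp 1) (gfun (D x) (U x)) \<partial>J)"
  proof -
    have lgm2: "(\<lambda>z. log (exp 1) (gfun (fst z) (snd z))) \<in> borel_measurable (count_space UNIV \<Otimes>\<^sub>M count_space (UNIV :: bool set))"
      using meas_rb[OF refl, of "\<lambda>d b. log (exp 1) (gfun d b)"] by simp
    show ?thesis
      using integral_distr[OF measurable_Pair[OF Dc Um] lgm2] unfolding Q_def by simp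
  qed
  also have "\<dots> = (\<Sum>d\<in>R. \<Sum>b\<in>UNIV. log (exp 1) (gfun d b) * qf L d b)"
    by (rule riJ)
  also have "\<dots> = L * ln 2"
    unfolding R_def by (simp add: UNIV_bool gfun_def qf_def log_def field_simps)
  finally show ?thesis .
qed



lemma zol_01: "zero_one_loss f w z \<in> {0, 1}"
  unfolding zero_one_loss_def by auto

lemma zol_nonneg: "0 \<le> zero_one_loss f w z"
  unfolding zero_one_loss_def by auto

lemma zol_le1: "zero_one_loss f w z \<le> 1"
  unfolding zero_one_loss_def by auto

context
  fixes n :: nat and \<mu> :: "('x \<times> 'y) measure" and Wm :: "'w measure"
    and A :: "(nat \<Rightarrow> 'x \<times> 'y) \<Rightarrow> 'w measure" and f :: "'w \<Rightarrow> 'x \<Rightarrow> 'y"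
  assumes mu: "prob_space \<mu>"
    and A_kernel: "A \<in> PiM {..<n} (\<lambda>_. \<mu>) \<rightarrow>\<^sub>M prob_algebra Wm"
    and loss_meas: "(\<lambda>(w, z). zero_one_loss f w z) \<in> borel_measurable (Wm \<Otimes>\<^sub>M \<mu>)"
begin

lemma Zij_meas:
  assumes i: "i < n"
  shows "(\<lambda>x. fst (fst x) (i, j)) \<in> super_space n \<mu> \<Otimes>\<^sub>M Wm \<rightarrow>\<^sub>M \<mu>"
proof -
  have "(\<lambda>zt. zt (i, j)) \<in> PiM ({..<n} \<times> UNIV) (\<lambda>_. \<mu>) \<rightarrow>\<^sub>M \<mu>"
    using i by (intro measurable_component_singleton) auto
  then have "(\<lambda>x. fst x (i, j)) \<in> super_space n \<mu> \<rightarrow>\<^sub>M \<mu>"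
    unfolding super_space_def by (rule measurable_compose[OF measurable_fst])
  then show ?thesis by (rule measurable_compose[OF measurable_fst])
qed

lemma sL_meas:
  assumes i: "i < n"
  shows "(\<lambda>x. zero_one_loss f (snd x) (fst (fst x) (i, j))) \<in> borel_measurable (super_space n \<mu> \<Otimes>\<^sub>M Wm)"
proof -
  have "(\<lambda>x. (snd x, fst (fst x) (i, j))) \<in> super_space n \<mu> \<Otimes>\<^sub>M Wm \<rightarrow>\<^sub>M Wm \<Otimes>\<^sub>M \<mu>"
    by (intro measurable_Pair measurable_snd Zij_meas[OF i])
  from measurable_compose[OF this loss_meas] show ?thesis by simp
qed

lemma sU_meas:
  assumes i: "i < n"
  shows "(\<lambda>x. snd (fst x) i) \<in> super_space n \<mu> \<Otimes>\<^sub>M Wm \<rightarrow>\<^sub>M count_space UNIV"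
  by (rule measurable_compose[OF measurable_fst U_meas[OF i]])

definition Gk :: "(nat \<Rightarrow> 'x \<times> 'y) \<times> ('x \<times> 'y) \<Rightarrow> ennreal" where
  "Gk p = (\<integral>\<^sup>+w. ennreal (zero_one_loss f w (snd p)) \<partial>A (fst p))"

lemma Gk_meas: "Gk \<in> borel_measurable (PiM {..<n} (\<lambda>_. \<mu>) \<Otimes>\<^sub>M \<mu>)"
proof -
  have "(\<lambda>(p, w). ennreal (zero_one_loss f w (snd p))) \<in> borel_measurable ((PiM {..<n} (\<lambda>_. \<mu>) \<Otimes>\<^sub>M \<mu>) \<Otimes>\<^sub>M Wm)"
  proof -
    have "(\<lambda>x. (snd x, snd (fst x))) \<in> (PiM {..<n} (\<lambda>_. \<mu>) \<Otimes>\<^sub>M \<mu>) \<Otimes>\<^sub>M Wm \<rightarrow>\<^sub>M Wm \<Otimes>\<^sub>M \<mu>"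
      by measurable
    from measurable_compose[OF this loss_meas] show ?thesis
      by (simp add: case_prod_beta')
  qed
  moreover have "(\<lambda>p. A (fst p)) \<in> PiM {..<n} (\<lambda>_. \<mu>) \<Otimes>\<^sub>M \<mu> \<rightarrow>\<^sub>M subprob_algebra Wm"
    by (rule measurable_compose[OF measurable_fst measurable_prob_algebraD[OF A_kernel]])
  ultimately show ?thesis unfolding Gk_def
    by (rule nn_integral_measurable_subprob_algebra2)
qed

definition Lmu :: ennreal where
  "Lmu = (\<integral>\<^sup>+s. \<integral>\<^sup>+z. Gk (s, z) \<partial>\<mu> \<partial>PiM {..<n} (\<lambda>_. \<mu>))"

lemma R1:
  assumes i: "i < n"
  shows "(\<integral>\<^sup>+y. indicator {y. sU i y = b} y * ennreal (zero_one_loss f (sW y) (sZ i (\<not> b) y)) \<partial>super_joint n \<mu> Wm A)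
     = (1/2) * Lmu"
proof -
  have Fm: "(\<lambda>y. indicator {y. sU i y = b} y * ennreal (zero_one_loss f (sW y) (sZ i (\<not> b) y))) \<in> borel_measurable (super_space n \<mu> \<Otimes>\<^sub>M Wm)"
  proof -
    have "{y. sU i y = b} \<inter> space (super_space n \<mu> \<Otimes>\<^sub>M Wm) = (\<lambda>x. snd (fst x) i) -` {b} \<inter> space (super_space n \<mu> \<Otimes>\<^sub>M Wm)"
      by (auto simp: sU_def)
    also have "\<dots> \<in> sets (super_space n \<mu> \<Otimes>\<^sub>M Wm)"
      by (rule measurable_sets[OF sU_meas[OF i]]) simp
    finally have "(indicator {y. sU i y = b} :: _ \<Rightarrow> ennreal) \<in> borel_measurable (super_space n \<mu> \<Otimes>\<^sub>M Wm)"
      by (simp add: borel_measurable_indicator_iff)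
    moreover have "(\<lambda>y. ennreal (zero_one_loss f (sW y) (sZ i (\<not> b) y))) \<in> borel_measurable (super_space n \<mu> \<Otimes>\<^sub>M Wm)"
      using sL_meas[OF i, of "\<not> b"] unfolding sW_def sZ_def by measurable
    ultimately show ?thesis by (rule borel_measurable_times_ennreal)
  qed
  have "(\<integral>\<^sup>+y. indicator {y. sU i y = b} y * ennreal (zero_one_loss f (sW y) (sZ i (\<not> b) y)) \<partial>super_joint n \<mu> Wm A)
     = (\<integral>\<^sup>+x. \<integral>\<^sup>+w. indicator {y. sU i y = b} (x, w) * ennreal (zero_one_loss f (sW (x, w)) (sZ i (\<not> b) (x, w))) \<partial>A (select n (fst x) (snd x)) \<partial>super_space n \<mu>)"
    by (rule J_nn[OF mu A_kernel Fm])
  also have "\<dots> = (\<integral>\<^sup>+x. indicator {x. snd x i = b} x * Gk (select n (fst x) (snd x), fst x (i, \<not> snd x i)) \<partial>super_space n \<mu>)"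
  proof (rule nn_integral_cong)
    fix x assume x: "x \<in> space (super_space n \<mu>)"
    show "(\<integral>\<^sup>+w. indicator {y. sU i y = b} (x, w) * ennreal (zero_one_loss f (sW (x, w)) (sZ i (\<not> b) (x, w))) \<partial>A (select n (fst x) (snd x)))
      = indicator {x. snd x i = b} x * Gk (select n (fst x) (snd x), fst x (i, \<not> snd x i))"
    proof (cases "snd x i = b")
      case True
      then show ?thesis by (simp add: sU_def sW_def sZ_def Gk_def)
    next
      case False
      then show ?thesis by (simp add: sU_def)
    qed
  qed
  also have "\<dots> = (1/2) * Lmu"
    unfolding Lmu_def by (rule key[OF mu i Gk_meas])
  finally show ?thesis .
qed

lemma Mn_prob': "prob_space (PiM {..<n} (\<lambda>_. \<mu>))"
  using mu by (intro prob_space_PiM) auto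

lemma R2:
  assumes i: "i < n"
  shows "emeasure (super_joint n \<mu> Wm A) {y \<in> space (super_joint n \<mu> Wm A). sU i y = b} = 1/2"
proof -
  let ?J = "super_joint n \<mu> Wm A"
  have Im: "(indicator {y. sU i y = b} :: _ \<Rightarrow> ennreal) \<in> borel_measurable (super_space n \<mu> \<Otimes>\<^sub>M Wm)"
  proof -
    have "{y. sU i y = b} \<inter> space (super_space n \<mu> \<Otimes>\<^sub>M Wm) = (\<lambda>x. snd (fst x) i) -` {b} \<inter> space (super_space n \<mu> \<Otimes>\<^sub>M Wm)"
      by (auto simp: sU_def)
    also have "\<dots> \<in> sets (super_space n \<mu> \<Otimes>\<^sub>M Wm)"
      by (rule measurable_sets[OF sU_meas[OF i]]) simp
    finally show ?thesis by (simp add: borel_measurable_indicator_iff)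
  qed
  have S: "{y \<in> space ?J. sU i y = b} \<in> sets ?J"
  proof -
    have "{y \<in> space ?J. sU i y = b} = {y. sU i y = b} \<inter> space (super_space n \<mu> \<Otimes>\<^sub>M Wm)"
      using J_space[OF mu A_kernel] by auto
    also have "\<dots> \<in> sets ?J"
      using Im J_sets[OF mu A_kernel] by (simp add: borel_measurable_indicator_iff)
    finally show ?thesis .
  qed
  have "emeasure ?J {y \<in> space ?J. sU i y = b} = (\<integral>\<^sup>+y. indicator {y \<in> space ?J. sU i y = b} y \<partial>?J)"
    using S by simp
  also have "\<dots> = (\<integral>\<^sup>+y. indicator {y. sU i y = b} y \<partial>?J)"
    by (rule nn_integral_cong) (simp split: split_indicator)
  also have "\<dots> = (\<integral>\<^sup>+x. \<integral>\<^sup>+w. indicator {y. sU i y = b} (x, w) \<partial>A (select n (fst x) (snd x)) \<partial>super_space n \<mu>)"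
    by (rule J_nn[OF mu A_kernel Im])
  also have "\<dots> = (\<integral>\<^sup>+x. indicator {x. snd x i = b} x * (\<lambda>p. 1::ennreal) (select n (fst x) (snd x), fst x (i, \<not> snd x i)) \<partial>super_space n \<mu>)"
  proof (rule nn_integral_cong)
    fix x assume x: "x \<in> space (super_space n \<mu>)"
    have s: "select n (fst x) (snd x) \<in> space (PiM {..<n} (\<lambda>_. \<mu>))"
      using measurable_space[OF select_meas x] .
    interpret P: prob_space "A (select n (fst x) (snd x))" using A_prob[OF mu A_kernel s] .
    show "(\<integral>\<^sup>+w. indicator {y. sU i y = b} (x, w) \<partial>A (select n (fst x) (snd x)))
      = indicator {x. snd x i = b} x * (\<lambda>p. 1::ennreal) (select n (fst x) (snd x), fst x (i, \<not> snd x i))"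
      by (cases "snd x i = b") (simp_all add: sU_def P.emeasure_space_1)
  qed
  also have "\<dots> = (1/2) * (\<integral>\<^sup>+s. \<integral>\<^sup>+z. (\<lambda>p. 1::ennreal) (s, z) \<partial>\<mu> \<partial>PiM {..<n} (\<lambda>_. \<mu>))"
    by (rule key[OF mu i]) simp
  also have "\<dots> = 1/2"
  proof -
    interpret M: prob_space \<mu> by (rule mu)
    interpret N: prob_space "PiM {..<n} (\<lambda>_. \<mu>)" by (rule Mn_prob')
    show ?thesis by (simp add: M.emeasure_space_1 N.emeasure_space_1)
  qed
  finally show ?thesis .
qed

lemma P1:
  assumes n: "0 < n" and H: "H \<in> borel_measurable (PiM {..<n} (\<lambda>_. \<mu>))"
  shows "(\<integral>\<^sup>+s. H s \<partial>PiM {..<n} (\<lambda>_. \<mu>)) = (\<integral>\<^sup>+x. H (select n (fst x) (snd x)) \<partial>super_space n \<mu>)"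
proof -
  interpret M: prob_space \<mu> by (rule mu)
  have G: "(\<lambda>p. H (fst p)) \<in> borel_measurable (PiM {..<n} (\<lambda>_. \<mu>) \<Otimes>\<^sub>M \<mu>)"
    using H by measurable
  have k: "(\<integral>\<^sup>+x. indicator {x. snd x 0 = b} x * H (select n (fst x) (snd x)) \<partial>super_space n \<mu>)
      = (1/2) * (\<integral>\<^sup>+s. H s \<partial>PiM {..<n} (\<lambda>_. \<mu>))" for b
    using key[OF mu n G, of b] by (simp add: M.emeasure_space_1)
  have Hs: "(\<lambda>x. H (select n (fst x) (snd x))) \<in> borel_measurable (super_space n \<mu>)"
    by (rule measurable_compose[OF select_meas H])
  have Ib: "(indicator {x. snd x 0 = b} :: _ \<Rightarrow> ennreal) \<in> borel_measurable (super_space n \<mu>)" for b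
  proof -
    have "{x. snd x 0 = b} \<inter> space (super_space n \<mu>) = (\<lambda>x. snd x 0) -` {b} \<inter> space (super_space n \<mu>)"
      by auto
    also have "\<dots> \<in> sets (super_space n \<mu>)"
      by (rule measurable_sets[OF U_meas[OF n]]) simp
    finally show ?thesis by (simp add: borel_measurable_indicator_iff)
  qed
  have "(\<integral>\<^sup>+x. H (select n (fst x) (snd x)) \<partial>super_space n \<mu>)
     = (\<integral>\<^sup>+x. indicator {x. snd x 0 = True} x * H (select n (fst x) (snd x))
             + indicator {x. snd x 0 = False} x * H (select n (fst x) (snd x)) \<partial>super_space n \<mu>)"
    by (rule nn_integral_cong) (simp split: split_indicator)
  also have "\<dots> = (\<integral>\<^sup>+x. indicator {x. snd x 0 = True} x * H (select n (fst x) (snd x)) \<partial>super_space n \<mu>)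
             + (\<integral>\<^sup>+x. indicator {x. snd x 0 = False} x * H (select n (fst x) (snd x)) \<partial>super_space n \<mu>)"
    by (rule nn_integral_add) (intro borel_measurable_times_ennreal Ib Hs)+
  also have "\<dots> = (\<integral>\<^sup>+s. H s \<partial>PiM {..<n} (\<lambda>_. \<mu>))"
    unfolding k by (simp add: distrib_right[symmetric] flip: add_divide_distrib_ennreal)
  finally show ?thesis ..
qed

lemma h_meas: "(\<lambda>w. \<integral>z. zero_one_loss f w z \<partial>\<mu>) \<in> borel_measurable Wm"
proof -
  interpret M: prob_space \<mu> by (rule mu)
  show ?thesis
    by (rule M.borel_measurable_lebesgue_integral) (use loss_meas in simp)
qed

lemma h_nn:
  assumes w: "w \<in> space Wm"
  shows "ennreal (\<integral>z. zero_one_loss f w z \<partial>\<mu>) = (\<integral>\<^sup>+z. ennreal (zero_one_loss f w z) \<partial>\<mu>)"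
proof -
  interpret M: prob_space \<mu> by (rule mu)
  have m: "(\<lambda>z. zero_one_loss f w z) \<in> borel_measurable \<mu>"
    using measurable_Pair2[OF loss_meas w] by simp
  have "integrable \<mu> (\<lambda>z. zero_one_loss f w z)"
    by (rule M.integrable_const_bound[where B=1]) (auto simp: m zol_nonneg zol_le1)
  then show ?thesis
    by (subst nn_integral_eq_integral) (auto simp: zol_nonneg)
qed

lemma R3: "pop_risk n \<mu> Wm A (zero_one_loss f) = enn2real Lmu"
proof -
  interpret M: prob_space \<mu> by (rule mu)
  let ?h = "\<lambda>w. \<integral>z. zero_one_loss f w z \<partial>\<mu>"
  let ?Mn = "PiM {..<n} (\<lambda>_. \<mu>)"
  have hm: "(\<lambda>p. ?h (snd p)) \<in> borel_measurable (?Mn \<Otimes>\<^sub>M Wm)"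
    by (rule measurable_compose[OF measurable_snd h_meas])
  have hnn: "0 \<le> ?h w" for w by (rule Bochner_Integration.integral_nonneg) (simp add: zol_nonneg)
  have "pop_risk n \<mu> Wm A (zero_one_loss f) = (\<integral>p. ?h (snd p) \<partial>std_joint n \<mu> Wm A)"
    unfolding pop_risk_def ..
  also have "\<dots> = enn2real (\<integral>\<^sup>+p. ennreal (?h (snd p)) \<partial>std_joint n \<mu> Wm A)"
  proof (rule integral_eq_nn_integral)
    have "sets (std_joint n \<mu> Wm A) = sets (?Mn \<Otimes>\<^sub>M Wm)"
      unfolding std_joint_def
      by (rule sets_bind'[where M="?Mn"]) (auto simp: space_prob_algebra Mn_prob' intro!: measurable_bind_prob_space2[OF A_kernel] measurable_return_prob_space[THEN measurable_compose[rotated]])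
    then show "(\<lambda>p. ?h (snd p)) \<in> borel_measurable (std_joint n \<mu> Wm A)"
      using hm by (simp cong: measurable_cong_sets)
  qed (simp add: hnn)
  also have "(\<integral>\<^sup>+p. ennreal (?h (snd p)) \<partial>std_joint n \<mu> Wm A) = (\<integral>\<^sup>+s. \<integral>\<^sup>+w. ennreal (?h w) \<partial>A s \<partial>?Mn)"
    using std_nn[OF mu A_kernel, of "\<lambda>p. ennreal (?h (snd p))"] hm by simp
  also have "\<dots> = Lmu"
    unfolding Lmu_def Gk_def
  proof (rule nn_integral_cong)
    fix s assume s: "s \<in> space ?Mn"
    interpret P: prob_space "A s" using A_prob[OF mu A_kernel s] .
    interpret PS: pair_sigma_finite "A s" \<mu>
      by (intro pair_sigma_finite.intro prob_space_imp_sigma_finite A_prob[OF mu A_kernel s] mu)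
    have "(\<integral>\<^sup>+w. ennreal (?h w) \<partial>A s) = (\<integral>\<^sup>+w. \<integral>\<^sup>+z. ennreal (zero_one_loss f w z) \<partial>\<mu> \<partial>A s)"
      by (rule nn_integral_cong) (simp add: h_nn A_space[OF mu A_kernel s])
    also have "\<dots> = (\<integral>\<^sup>+z. \<integral>\<^sup>+w. ennreal (zero_one_loss f w z) \<partial>A s \<partial>\<mu>)"
    proof (rule PS.Fubini'[symmetric])
      have "sets (A s \<Otimes>\<^sub>M \<mu>) = sets (Wm \<Otimes>\<^sub>M \<mu>)"
        by (rule sets_pair_measure_cong[OF A_sets[OF mu A_kernel s] refl])
      then show "case_prod (\<lambda>w z. ennreal (zero_one_loss f w z)) \<in> borel_measurable (A s \<Otimes>\<^sub>M \<mu>)"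
        using loss_meas by (simp cong: measurable_cong_sets add: case_prod_beta')
    qed
    finally show "(\<integral>\<^sup>+w. ennreal (?h w) \<partial>A s) = (\<integral>\<^sup>+z. \<integral>\<^sup>+w. ennreal (zero_one_loss f w (snd (s, z))) \<partial>A (fst (s, z)) \<partial>\<mu>)"
      by simp
  qed
  finally show ?thesis .
qed

lemma std_sets: "sets (std_joint n \<mu> Wm A) = sets (PiM {..<n} (\<lambda>_. \<mu>) \<Otimes>\<^sub>M Wm)"
  unfolding std_joint_def
  by (rule sets_bind'[where M="PiM {..<n} (\<lambda>_. \<mu>)"]) (auto simp: space_prob_algebra Mn_prob' intro!: measurable_bind_prob_space2[OF A_kernel] measurable_return_prob_space[THEN measurable_compose[rotated]])

lemma R4:
  assumes n: "0 < n"
    and interp: "\<forall>i<n. AE x in super_joint n \<mu> Wm A. zero_one_loss f (sW x) (sZ i (sU i x) x) = 0"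
  shows "emp_risk n \<mu> Wm A (zero_one_loss f) = 0"
proof -
  let ?Mn = "PiM {..<n} (\<lambda>_. \<mu>)"
  let ?J = "super_joint n \<mu> Wm A"
  define e where "e p = (\<Sum>i<n. zero_one_loss f (snd p) (fst p i)) / real n" for p :: "(nat \<Rightarrow> 'x \<times> 'y) \<times> 'w"
  have em: "e \<in> borel_measurable (?Mn \<Otimes>\<^sub>M Wm)"
  proof -
    have "(\<lambda>p. zero_one_loss f (snd p) (fst p i)) \<in> borel_measurable (?Mn \<Otimes>\<^sub>M Wm)" if i: "i < n" for i
    proof -
      have c: "(\<lambda>p. fst p i) \<in> ?Mn \<Otimes>\<^sub>M Wm \<rightarrow>\<^sub>M \<mu>"
        using i by (intro measurable_compose[OF measurable_fst measurable_component_singleton]) auto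
      have "(\<lambda>p. (snd p, fst p i)) \<in> ?Mn \<Otimes>\<^sub>M Wm \<rightarrow>\<^sub>M Wm \<Otimes>\<^sub>M \<mu>"
        by (intro measurable_Pair measurable_snd c)
      from measurable_compose[OF this loss_meas] show ?thesis by simp
    qed
    then show ?thesis unfolding e_def by (intro borel_measurable_divide borel_measurable_sum) auto
  qed
  have enn: "0 \<le> e p" for p unfolding e_def by (intro divide_nonneg_nonneg sum_nonneg) (auto simp: zol_nonneg)
  have "emp_risk n \<mu> Wm A (zero_one_loss f) = (\<integral>p. e p \<partial>std_joint n \<mu> Wm A)"
    unfolding emp_risk_def e_def ..
  also have "\<dots> = enn2real (\<integral>\<^sup>+p. ennreal (e p) \<partial>std_joint n \<mu> Wm A)"
    by (rule integral_eq_nn_integral) (use em std_sets in \<open>simp_all add: enn cong: measurable_cong_sets\<close>)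
  also have "(\<integral>\<^sup>+p. ennreal (e p) \<partial>std_joint n \<mu> Wm A) = (\<integral>\<^sup>+s. \<integral>\<^sup>+w. ennreal (e (s, w)) \<partial>A s \<partial>?Mn)"
    using std_nn[OF mu A_kernel, of "\<lambda>p. ennreal (e p)"] em by simp
  also have "\<dots> = (\<integral>\<^sup>+x. \<integral>\<^sup>+w. ennreal (e (select n (fst x) (snd x), w)) \<partial>A (select n (fst x) (snd x)) \<partial>super_space n \<mu>)"
  proof (rule P1[OF n])
    have "(\<lambda>(s, w). ennreal (e (s, w))) \<in> borel_measurable (?Mn \<Otimes>\<^sub>M Wm)"
      using em by (simp add: case_prod_beta')
    then show "(\<lambda>s. \<integral>\<^sup>+w. ennreal (e (s, w)) \<partial>A s) \<in> borel_measurable ?Mn"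
      by (rule nn_integral_measurable_subprob_algebra2[OF _ measurable_prob_algebraD[OF A_kernel]])
  qed
  also have "\<dots> = (\<integral>\<^sup>+y. ennreal (e (select n (fst (fst y)) (snd (fst y)), snd y)) \<partial>?J)"
  proof (rule J_nn[OF mu A_kernel, symmetric, of "\<lambda>y. ennreal (e (select n (fst (fst y)) (snd (fst y)), snd y))", simplified])
    have "(\<lambda>y. (select n (fst (fst y)) (snd (fst y)), snd y)) \<in> super_space n \<mu> \<Otimes>\<^sub>M Wm \<rightarrow>\<^sub>M ?Mn \<Otimes>\<^sub>M Wm"
      by (intro measurable_Pair measurable_snd measurable_compose[OF measurable_fst select_meas])
    from measurable_compose[OF this em]
    show "(\<lambda>y. ennreal (e (select n (fst (fst y)) (snd (fst y)), snd y))) \<in> borel_measurable (super_space n \<mu> \<Otimes>\<^sub>M Wm)"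
      by simp
  qed
  also have "\<dots> = (\<integral>\<^sup>+y. 0 \<partial>?J)"
  proof (rule nn_integral_cong_AE)
    have "AE y in ?J. \<forall>i\<in>{..<n}. zero_one_loss f (sW y) (sZ i (sU i y) y) = 0"
      using interp by (intro eventually_ball_finite) auto
    then show "AE y in ?J. ennreal (e (select n (fst (fst y)) (snd (fst y)), snd y)) = 0"
    proof (rule eventually_mono)
      fix y assume "\<forall>i\<in>{..<n}. zero_one_loss f (sW y) (sZ i (sU i y) y) = 0"
      then have "(\<Sum>i<n. zero_one_loss f (snd y) (select n (fst (fst y)) (snd (fst y)) i)) = 0"
        by (intro sum.neutral) (auto simp: select_def sW_def sZ_def sU_def)
      then show "ennreal (e (select n (fst (fst y)) (snd (fst y)), snd y)) = 0"
        unfolding e_def by simp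
    qed
  qed
  finally show ?thesis by simp
qed

lemma D_meas:
  assumes i: "i < n"
  shows "deltaL (zero_one_loss f) i \<in> borel_measurable (super_joint n \<mu> Wm A)"
proof -
  have "(\<lambda>x. zero_one_loss f (snd x) (fst (fst x) (i, True)) - zero_one_loss f (snd x) (fst (fst x) (i, False)))
      \<in> borel_measurable (super_space n \<mu> \<Otimes>\<^sub>M Wm)"
    by (intro borel_measurable_diff sL_meas[OF i])
  moreover have "deltaL (zero_one_loss f) i = (\<lambda>x. zero_one_loss f (snd x) (fst (fst x) (i, True)) - zero_one_loss f (snd x) (fst (fst x) (i, False)))"
    by (simp add: fun_eq_iff deltaL_def sL_def sW_def sZ_def)
  ultimately show ?thesis
    unfolding measurable_cong_sets[OF J_sets[OF mu A_kernel] refl] by simp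
qed

lemma U_meas_J:
  assumes i: "i < n"
  shows "sU i \<in> super_joint n \<mu> Wm A \<rightarrow>\<^sub>M count_space UNIV"
proof -
  have e: "sU i = (\<lambda>x. snd (fst x) i)" by (simp add: fun_eq_iff sU_def)
  show ?thesis
    unfolding measurable_cong_sets[OF J_sets[OF mu A_kernel] refl] e by (rule sU_meas[OF i])
qed

lemma D_range: "deltaL (zero_one_loss f) i x \<in> {-1, 0, 1}"
  using zol_01[of f "sW x" "sZ i True x"] zol_01[of f "sW x" "sZ i False x"]
  by (auto simp: deltaL_def sL_def)

lemma per_i:
  assumes i: "i < n"
    and interp: "AE x in super_joint n \<mu> Wm A. zero_one_loss f (sW x) (sZ i (sU i x) x) = 0"
  defines "J \<equiv> super_joint n \<mu> Wm A"
  defines "D \<equiv> deltaL (zero_one_loss f) i"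
  defines "L \<equiv> enn2real Lmu"
  shows "measure J {x\<in>space J. D x = 0 \<and> sU i x = b} / measure J {x\<in>space J. sU i x = b} = 1 - L"
    and "MI_nats J D (sU i) = L * ln 2"
    and "0 \<le> L" "L \<le> 1"
proof -
  interpret J: prob_space J unfolding J_def by (rule J_prob[OF mu A_kernel])
  have Dm[measurable]: "D \<in> borel_measurable J" unfolding D_def J_def by (rule D_meas[OF i])
  have Um[measurable]: "sU i \<in> J \<rightarrow>\<^sub>M count_space UNIV" unfolding J_def by (rule U_meas_J[OF i])
  have rng: "D x \<in> {-1, 0, 1}" for x unfolding D_def by (rule D_range)
  define Enz where "Enz b = {y\<in>space J. D y \<noteq> 0 \<and> sU i y = b}" for b
  define Eu where "Eu b = {y\<in>space J. sU i y = b}" for b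
  define Ed where "Ed d b = {y\<in>space J. D y = d \<and> sU i y = b}" for d b
  have Enz_sets[measurable]: "Enz b \<in> sets J" for b unfolding Enz_def by measurable
  have Eu_sets[measurable]: "Eu b \<in> sets J" for b unfolding Eu_def by measurable
  have Ed_sets[measurable]: "Ed d b \<in> sets J" for d b unfolding Ed_def by measurable
  have Eu_half: "measure J (Eu b) = 1/2" for b
  proof -
    have h: "(1/2 :: ennreal) = ennreal (1/2)" by (simp add: divide_ennreal_def)
    have e: "emeasure J (Eu b) = ennreal (1/2)"
      using R2[OF i, of b] unfolding Eu_def J_def h .
    show ?thesis unfolding measure_def e by (rule enn2real_ennreal) simp
  qed
  have Enz_eq: "emeasure J (Enz b) = (1/2) * Lmu" for b
  proof -
    have "emeasure J (Enz b) = (\<integral>\<^sup>+y. indicator (Enz b) y \<partial>J)" by simp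
    also have "\<dots> = (\<integral>\<^sup>+y. indicator {y. sU i y = b} y * ennreal (zero_one_loss f (sW y) (sZ i (\<not> b) y)) \<partial>J)"
    proof (rule nn_integral_cong_AE)
      show "AE y in J. indicator (Enz b) y = indicator {y. sU i y = b} y * ennreal (zero_one_loss f (sW y) (sZ i (\<not> b) y))"
        using interp unfolding J_def[symmetric]
      proof (rule AE_mp)
        show "AE y in J. zero_one_loss f (sW y) (sZ i (sU i y) y) = 0 \<longrightarrow>
          indicator (Enz b) y = indicator {y. sU i y = b} y * ennreal (zero_one_loss f (sW y) (sZ i (\<not> b) y))"
        proof (rule AE_I2)
          fix y assume y: "y \<in> space J"
          show "zero_one_loss f (sW y) (sZ i (sU i y) y) = 0 \<longrightarrow>
            indicator (Enz b) y = indicator {y. sU i y = b} y * ennreal (zero_one_loss f (sW y) (sZ i (\<not> b) y))"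
            using zol_01[of f "sW y" "sZ i True y"] zol_01[of f "sW y" "sZ i False y"] y
            by (cases b; cases "sU i y") (auto simp: Enz_def D_def deltaL_def sL_def indicator_def)
        qed
      qed
    qed
    also have "\<dots> = (1/2) * Lmu" unfolding J_def by (rule R1[OF i])
    finally show ?thesis .
  qed
  have Lfin: "Lmu \<noteq> \<infinity>"
  proof
    assume "Lmu = \<infinity>"
    then have "emeasure J (Enz True) = \<infinity>" using Enz_eq[of True] by (simp add: ennreal_divide_eq_top_iff)
    then show False by (simp add: J.emeasure_eq_measure)
  qed
  have Enz_m: "measure J (Enz b) = L / 2" for b
  proof -
    have "ennreal (measure J (Enz b)) = (1/2) * Lmu" using Enz_eq[of b] by (simp add: J.emeasure_eq_measure)
    also have "\<dots> = ennreal (L / 2)" using Lfin unfolding L_def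
      by (cases Lmu) (auto simp: ennreal_divide_numeral[symmetric] divide_ennreal_def mult.commute)
    finally show ?thesis by (simp add: L_def)
  qed
  show L0: "0 \<le> L" unfolding L_def by simp
  have "measure J (Enz True) \<le> measure J (Eu True)"
    by (intro J.finite_measure_mono) (auto simp: Enz_def Eu_def)
  then show L1: "L \<le> 1" using Enz_m[of True] Eu_half[of True] by simp
  have d0: "measure J (Ed 0 b) = (1 - L) / 2" for b
  proof -
    have "Eu b = Ed 0 b \<union> Enz b" "Ed 0 b \<inter> Enz b = {}" unfolding Eu_def Ed_def Enz_def by auto
    then have "measure J (Eu b) = measure J (Ed 0 b) + measure J (Enz b)"
      by (simp add: J.finite_measure_Union)
    then show ?thesis using Eu_half[of b] Enz_m[of b] by simp
  qed
  have AEsign: "AE y in J. (sU i y = False \<longrightarrow> D y \<noteq> -1) \<and> (sU i y = True \<longrightarrow> D y \<noteq> 1)"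
    using interp unfolding J_def[symmetric]
  proof (rule eventually_mono)
    fix y assume "zero_one_loss f (sW y) (sZ i (sU i y) y) = 0"
    then show "(sU i y = False \<longrightarrow> D y \<noteq> -1) \<and> (sU i y = True \<longrightarrow> D y \<noteq> 1)"
      using zol_01[of f "sW y" "sZ i True y"] zol_01[of f "sW y" "sZ i False y"]
      by (cases "sU i y") (auto simp: D_def deltaL_def sL_def)
  qed
  have q: "measure J (Ed d b) = qf L d b" if d: "d \<in> {-1, 0, 1}" for d b
  proof -
    consider "d = 0" | "d = 1 \<and> \<not> b" | "d = -1 \<and> b" | "d = 1 \<and> b" | "d = -1 \<and> \<not> b" using d by auto
    then show ?thesis
    proof cases
      case 1 then show ?thesis using d0[of b] by (simp add: qf_def)
    next
      case 2
      have "measure J (Ed d b) = measure J (Enz b)"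
      proof (rule measure_eq_AE)
        show "AE y in J. y \<in> Ed d b \<longleftrightarrow> y \<in> Enz b"
          using AEsign
        proof (rule eventually_mono)
          fix y assume h: "(sU i y = False \<longrightarrow> D y \<noteq> -1) \<and> (sU i y = True \<longrightarrow> D y \<noteq> 1)"
          have "D y = -1 \<or> D y = 0 \<or> D y = 1" using rng[of y] by auto
          then show "y \<in> Ed d b \<longleftrightarrow> y \<in> Enz b" using h 2 by (auto simp: Ed_def Enz_def)
        qed
      qed simp_all
      then show ?thesis using 2 Enz_m[of b] by (simp add: qf_def)
    next
      case 3
      have "measure J (Ed d b) = measure J (Enz b)"
      proof (rule measure_eq_AE)
        show "AE y in J. y \<in> Ed d b \<longleftrightarrow> y \<in> Enz b"
          using AEsign
        proof (rule eventually_mono)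
          fix y assume h: "(sU i y = False \<longrightarrow> D y \<noteq> -1) \<and> (sU i y = True \<longrightarrow> D y \<noteq> 1)"
          have "D y = -1 \<or> D y = 0 \<or> D y = 1" using rng[of y] by auto
          then show "y \<in> Ed d b \<longleftrightarrow> y \<in> Enz b" using h 3 by (auto simp: Ed_def Enz_def)
        qed
      qed simp_all
      then show ?thesis using 3 Enz_m[of b] by (simp add: qf_def)
    next
      case 4
      have "measure J (Ed d b) = measure J {}"
      proof (rule measure_eq_AE)
        show "AE y in J. y \<in> Ed d b \<longleftrightarrow> y \<in> {}"
          using AEsign
        proof (rule eventually_mono)
          fix y assume h: "(sU i y = False \<longrightarrow> D y \<noteq> -1) \<and> (sU i y = True \<longrightarrow> D y \<noteq> 1)"
          then show "y \<in> Ed d b \<longleftrightarrow> y \<in> {}" using 4 by (auto simp: Ed_def)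
        qed
      qed simp_all
      then show ?thesis using 4 by (simp add: qf_def)
    next
      case 5
      have "measure J (Ed d b) = measure J {}"
      proof (rule measure_eq_AE)
        show "AE y in J. y \<in> Ed d b \<longleftrightarrow> y \<in> {}"
          using AEsign
        proof (rule eventually_mono)
          fix y assume h: "(sU i y = False \<longrightarrow> D y \<noteq> -1) \<and> (sU i y = True \<longrightarrow> D y \<noteq> 1)"
          then show "y \<in> Ed d b \<longleftrightarrow> y \<in> {}" using 5 by (auto simp: Ed_def)
        qed
      qed simp_all
      then show ?thesis using 5 by (simp add: qf_def)
    qed
  qed
  show "measure J {x\<in>space J. D x = 0 \<and> sU i x = b} / measure J {x\<in>space J. sU i x = b} = 1 - L"
  proof -
    have "measure J (Ed 0 b) / measure J (Eu b) = 1 - L" by (simp add: d0 Eu_half)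
    then show ?thesis unfolding Ed_def Eu_def .
  qed
  show "MI_nats J D (sU i) = L * ln 2"
    unfolding MI_nats_def
    by (rule MI_calc[OF J.prob_space_axioms Dm Um rng L0 L1 q[unfolded Ed_def]])
qed

end

theorem theorem3:
  fixes n :: nat
    and \<mu> :: "('x \<times> 'y) measure"
    and Wm :: "'w measure"
    and A :: "(nat \<Rightarrow> 'x \<times> 'y) \<Rightarrow> 'w measure"
    and f :: "'w \<Rightarrow> 'x \<Rightarrow> 'y"
  assumes n_pos: "0 < n"
    and mu: "prob_space \<mu>"
    and A_kernel: "A \<in> PiM {..<n} (\<lambda>_. \<mu>) \<rightarrow>\<^sub>M prob_algebra Wm"
    and loss_meas: "(\<lambda>(w, z). zero_one_loss f w z) \<in> borel_measurable (Wm \<Otimes>\<^sub>M \<mu>)"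
    and interpolating: "\<forall>i<n. AE x in super_joint n \<mu> Wm A.
                          zero_one_loss f (sW x) (sZ i (sU i x) x) = 0"
  shows "\<forall>i<n.
           (let J = super_joint n \<mu> Wm A;
                \<alpha> = measure J {x \<in> space J. deltaL (zero_one_loss f) i x = 0 \<and> sU i x = False}
                    / measure J {x \<in> space J. sU i x = False}
            in \<alpha> = measure J {x \<in> space J. deltaL (zero_one_loss f) i x = 0 \<and> sU i x = True}
                    / measure J {x \<in> space J. sU i x = True}
             \<and> MI_nats J (deltaL (zero_one_loss f) i) (sU i) = (1 - \<alpha>) * ln 2)
         \<and> \<bar>gen_err n \<mu> Wm A (zero_one_loss f)\<bar> = pop_risk n \<mu> Wm A (zero_one_loss f)
         \<and> pop_risk n \<mu> Wm A (zero_one_loss f)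
           = (\<Sum>i<n. MI_nats (super_joint n \<mu> Wm A) (deltaL (zero_one_loss f) i) (sU i)
                      / (real n * ln 2))"
proof -
  let ?J = "super_joint n \<mu> Wm A"
  let ?L = "pop_risk n \<mu> Wm A (zero_one_loss f)"
  note R3' = R3[OF mu A_kernel loss_meas, symmetric]
  have P: "measure ?J {x \<in> space ?J. deltaL (zero_one_loss f) i x = 0 \<and> sU i x = b} / measure ?J {x \<in> space ?J. sU i x = b} = 1 - ?L"
    "MI_nats ?J (deltaL (zero_one_loss f) i) (sU i) = ?L * ln 2"
    "0 \<le> ?L"
    if i: "i < n" for i b
  proof -
    have ai: "AE x in ?J. zero_one_loss f (sW x) (sZ i (sU i x) x) = 0"
      using interpolating i by blast
    note pi = per_i[OF mu A_kernel loss_meas i ai, unfolded R3']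
    show "measure ?J {x \<in> space ?J. deltaL (zero_one_loss f) i x = 0 \<and> sU i x = b} / measure ?J {x \<in> space ?J. sU i x = b} = 1 - ?L"
      by (rule pi(1))
    show "MI_nats ?J (deltaL (zero_one_loss f) i) (sU i) = ?L * ln 2" by (rule pi(2))
    show "0 \<le> ?L" by (rule pi(3))
  qed
  have L0: "0 \<le> ?L" using P(3)[OF n_pos] .
  have emp: "emp_risk n \<mu> Wm A (zero_one_loss f) = 0"
    by (rule R4[OF mu A_kernel loss_meas n_pos interpolating])
  have part1: "\<forall>i<n.
           (let J = super_joint n \<mu> Wm A;
                \<alpha> = measure J {x \<in> space J. deltaL (zero_one_loss f) i x = 0 \<and> sU i x = False}
                    / measure J {x \<in> space J. sU i x = False}
            in \<alpha> = measure J {x \<in> space J. deltaL (zero_one_loss f) i x = 0 \<and> sU i x = True}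
                    / measure J {x \<in> space J. sU i x = True}
             \<and> MI_nats J (deltaL (zero_one_loss f) i) (sU i) = (1 - \<alpha>) * ln 2)"
  proof (intro allI impI)
    fix i assume i: "i < n"
    show "let J = super_joint n \<mu> Wm A;
                \<alpha> = measure J {x \<in> space J. deltaL (zero_one_loss f) i x = 0 \<and> sU i x = False}
                    / measure J {x \<in> space J. sU i x = False}
            in \<alpha> = measure J {x \<in> space J. deltaL (zero_one_loss f) i x = 0 \<and> sU i x = True}
                    / measure J {x \<in> space J. sU i x = True}
             \<and> MI_nats J (deltaL (zero_one_loss f) i) (sU i) = (1 - \<alpha>) * ln 2"
      unfolding Let_def P(1)[OF i, of False] P(1)[OF i, of True] P(2)[OF i] by simp
  qed
  have part2: "\<bar>gen_err n \<mu> Wm A (zero_one_loss f)\<bar> = ?L"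
    unfolding gen_err_def emp using L0 by simp
  have "(\<Sum>i<n. MI_nats ?J (deltaL (zero_one_loss f) i) (sU i) / (real n * ln 2))
      = (\<Sum>i<n. ?L * ln 2 / (real n * ln 2))"
    by (rule sum.cong) (simp_all add: P(2))
  also have "\<dots> = ?L"
    using n_pos by simp
  finally have part3: "?L = (\<Sum>i<n. MI_nats ?J (deltaL (zero_one_loss f) i) (sU i) / (real n * ln 2))" ..
  show ?thesis using part1 part2 part3 by blast
qed

end
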